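(* Let $P$ be a poset on $[n]$ with natural labeling. Let $G$ be the digraph with vertex set $\mathcal{L}(P)$ having an edge $\pi\to\pi'$ if and only if $\pi'=\pi\partial_j$ for some $j\in[n]$ (respectively, $\pi'=\pi\tau_j$ for some $j\in[n-1]$). Then $G$ is strongly connected.
   Context: $\mathcal{L}(P)=\{\pi\in S_n : i\prec j \Rightarrow \pi^{-1}_i<\pi^{-1}_j\}$ in one-line notation $\pi=\pi_1\cdots\pi_n$. $\pi\tau_i$ ($1\le i<n$) swaps $\pi_i,\pi_{i+1}$ if they are incomparable in $P$ and is $\pi$ otherwise; operators act on the right, $\pi(\sigma\tau)=(\pi\sigma)\tau$; $\partial_j=\tau_j\tau_{j+1}\cdots\tau_{n-1}$ for $1\le j\le n$. *)

theory Defs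
  imports Main
begin

text \<open>A poset on [n] = {1..n} is a relation P (pairs (i,j) meaning i \<preceq> j)
  with partial_order_on {1..n} P.  Permutations in one-line notation are lists.\<close>

definition natural_labeling :: "nat \<Rightarrow> (nat \<times> nat) set \<Rightarrow> bool" where
  "natural_labeling n P \<longleftrightarrow> (\<forall>i j. (i, j) \<in> P \<and> i \<noteq> j \<longrightarrow> i < j)"

definition incomparable :: "(nat \<times> nat) set \<Rightarrow> nat \<Rightarrow> nat \<Rightarrow> bool" where
  "incomparable P a b \<longleftrightarrow> (a, b) \<notin> P \<and> (b, a) \<notin> P"

text \<open>Linear extensions: permutations pi of [n] with i \<prec> j implying pi^{-1}(i) < pi^{-1}(j);
  stated via positions: if entry at position p precedes entry at position q in P, then p < q.\<close>
definition lin_ext :: "nat \<Rightarrow> (nat \<times> nat) set \<Rightarrow> nat list set" where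
  "lin_ext n P = {\<pi>. distinct \<pi> \<and> set \<pi> = {1..n} \<and>
     (\<forall>p<length \<pi>. \<forall>q<length \<pi>. (\<pi> ! p, \<pi> ! q) \<in> P \<and> \<pi> ! p \<noteq> \<pi> ! q \<longrightarrow> p < q)}"

text \<open>tau_i (1-based position i, 1 \<le> i < n): swap entries at positions i, i+1 if incomparable.\<close>
definition tau :: "(nat \<times> nat) set \<Rightarrow> nat \<Rightarrow> nat list \<Rightarrow> nat list" where
  "tau P i \<pi> =
     (if 1 \<le> i \<and> i < length \<pi> \<and> incomparable P (\<pi> ! (i - 1)) (\<pi> ! i)
      then \<pi>[i - 1 := \<pi> ! i, i := \<pi> ! (i - 1)] else \<pi>)"

text \<open>partial_j = tau_j tau_{j+1} ... tau_{n-1}, acting on the right: first tau_j, then tau_{j+1}, ...\<close>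
definition promo :: "nat \<Rightarrow> (nat \<times> nat) set \<Rightarrow> nat \<Rightarrow> nat list \<Rightarrow> nat list" where
  "promo n P j \<pi> = fold (tau P) [j..<n] \<pi>"

definition promo_edges :: "nat \<Rightarrow> (nat \<times> nat) set \<Rightarrow> (nat list \<times> nat list) set" where
  "promo_edges n P = {(\<pi>, \<pi>'). \<pi> \<in> lin_ext n P \<and> \<pi>' \<in> lin_ext n P \<and>
      (\<exists>j\<in>{1..n}. \<pi>' = promo n P j \<pi>)}"

definition tau_edges :: "nat \<Rightarrow> (nat \<times> nat) set \<Rightarrow> (nat list \<times> nat list) set" where
  "tau_edges n P = {(\<pi>, \<pi>'). \<pi> \<in> lin_ext n P \<and> \<pi>' \<in> lin_ext n P \<and>
      (\<exists>j\<in>{1..<n}. \<pi>' = tau P j \<pi>)}"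

definition strongly_connected_on :: "'a set \<Rightarrow> ('a \<times> 'a) set \<Rightarrow> bool" where
  "strongly_connected_on V E \<longleftrightarrow> (\<forall>x\<in>V. \<forall>y\<in>V. (x, y) \<in> E\<^sup>*)"

end

theory Submission
  imports Defs
begin

lemma tau_invol: "tau P i (tau P i xs) = xs"
  unfolding tau_def incomparable_def
  by (auto simp: nth_list_update list_update_swap)

lemma lin_ext_len: "xs \<in> lin_ext n P \<Longrightarrow> length xs = n"
  unfolding lin_ext_def using distinct_card by fastforce

lemma tau_lin_ext:
  assumes x: "xs \<in> lin_ext n P"
  shows "tau P i xs \<in> lin_ext n P"
proof (cases "1 \<le> i \<and> i < length xs \<and> incomparable P (xs ! (i - 1)) (xs ! i)")
  case False
  have "tau P i xs = xs" unfolding tau_def using False by (rule if_not_P)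
  then show ?thesis using x by simp
next
  case True
  define k where "k = i - 1"
  have i: "i = Suc k" using True k_def by simp
  have kl: "Suc k < length xs" using True i by simp
  have inc: "(xs!k, xs!Suc k) \<notin> P" "(xs!Suc k, xs!k) \<notin> P"
    using True i by (auto simp: incomparable_def)
  define ys where "ys = xs[k := xs ! Suc k, Suc k := xs ! k]"
  have t: "tau P i xs = ys" using True i by (simp add: tau_def ys_def)
  define s where "s p = (if p = k then Suc k else if p = Suc k then k else p)" for p
  have len: "length ys = length xs" by (simp add: ys_def)
  have ysn: "ys ! p = xs ! s p" if "p < length xs" for p
    using that kl by (auto simp: ys_def s_def nth_list_update)
  have sl: "s p < length xs" if "p < length xs" for p
    using that kl by (auto simp: s_def)
  have ord: "\<forall>p<length xs. \<forall>q<length xs. (xs ! p, xs ! q) \<in> P \<and> xs ! p \<noteq> xs ! q \<longrightarrow> p < q"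
    using x by (simp add: lin_ext_def)
  have "p < q" if pq: "p < length ys" "q < length ys" "(ys ! p, ys ! q) \<in> P" "ys ! p \<noteq> ys ! q" for p q
  proof -
    have "s p < s q" using ord pq len ysn sl by metis
    moreover have "\<not> (s p = k \<and> s q = Suc k)" using inc pq len ysn by metis
    moreover have "\<not> (s p = Suc k \<and> s q = k)" using inc pq len ysn by metis
    ultimately show ?thesis unfolding s_def by (auto split: if_splits)
  qed
  moreover have "distinct ys" "set ys = {1..n}"
    using x kl by (auto simp: ys_def lin_ext_def)
  ultimately show ?thesis unfolding t lin_ext_def by auto
qed

definition wt :: "nat list \<Rightarrow> nat" where
  "wt xs = (\<Sum>p<length xs. p * xs ! p)"

lemma wt_upd:
  assumes "k < length xs"
  shows "wt (xs[k := x]) + k * xs ! k = wt xs + k * x"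
proof -
  have fin: "finite {..<length xs}" by simp
  have kin: "k \<in> {..<length xs}" using assms by simp
  have r: "(\<Sum>p\<in>{..<length xs} - {k}. p * xs[k := x] ! p) = (\<Sum>p\<in>{..<length xs} - {k}. p * xs ! p)"
    by (rule sum.cong) auto
  show ?thesis unfolding wt_def
    using sum.remove[OF fin kin, of "\<lambda>p. p * xs[k := x] ! p"] sum.remove[OF fin kin, of "\<lambda>p. p * xs ! p"] r assms
    by simp
qed

lemma wt_swap:
  assumes "Suc k < length xs" "xs ! Suc k < xs ! k"
  shows "wt xs < wt (xs[k := xs ! Suc k, Suc k := xs ! k])"
proof -
  define a where "a = xs ! k"
  define b where "b = xs ! Suc k"
  define ys where "ys = xs[k := b]"
  have 1: "wt ys + k * a = wt xs + k * b" using wt_upd[of k xs b] assms by (simp add: ys_def a_def)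
  have ysb: "ys ! Suc k = b" using assms by (simp add: ys_def b_def)
  have 2: "wt (ys[Suc k := a]) + Suc k * b = wt ys + Suc k * a"
    using wt_upd[of "Suc k" ys a] assms ysb by (simp add: ys_def)
  have "b < a" using assms by (simp add: a_def b_def)
  then have "wt xs < wt (ys[Suc k := a])" using 1 2 by (simp add: algebra_simps)
  then show ?thesis by (simp add: ys_def a_def b_def)
qed

lemma wt_bound:
  assumes "xs \<in> lin_ext n P"
  shows "wt xs \<le> n * (n * n)"
proof -
  have l: "length xs = n" using lin_ext_len[OF assms] .
  have "p * xs ! p \<le> n * n" if "p < n" for p
  proof -
    have "xs ! p \<in> {1..n}" using assms that l unfolding lin_ext_def by (metis (mono_tags, lifting) mem_Collect_eq nth_mem)
    then have "xs ! p \<le> n" by simp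
    then show ?thesis using that by (simp add: mult_le_mono)
  qed
  then have "wt xs \<le> (\<Sum>p<n. n * n)" unfolding wt_def l by (rule sum_mono) simp
  then show ?thesis by simp
qed

lemma reach_sorted:
  assumes nl: "natural_labeling n P"
  shows "xs \<in> lin_ext n P \<Longrightarrow> (xs, [1..<Suc n]) \<in> (tau_edges n P)\<^sup>*"
proof (induction "n * (n * n) - wt xs" arbitrary: xs rule: less_induct)
  case less
  note x = less.prems
  have l: "length xs = n" using lin_ext_len[OF x] .
  show ?case
  proof (cases "\<exists>k. Suc k < n \<and> xs ! Suc k < xs ! k")
    case False
    have "sorted xs" unfolding sorted_iff_nth_Suc using False l by (meson not_le)
    moreover have "distinct xs" "set xs = {1..n}" using x by (auto simp: lin_ext_def)
    ultimately have "xs = [1..<Suc n]"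
      by (intro sorted_distinct_set_unique) (simp_all del: upt_Suc add: atLeastLessThanSuc_atLeastAtMost)
    then show ?thesis by simp
  next
    case True
    then obtain k where k: "Suc k < n" "xs ! Suc k < xs ! k" by blast
    have ord: "\<forall>p<length xs. \<forall>q<length xs. (xs ! p, xs ! q) \<in> P \<and> xs ! p \<noteq> xs ! q \<longrightarrow> p < q"
      using x by (simp add: lin_ext_def)
    have inc: "incomparable P (xs ! k) (xs ! Suc k)"
    proof -
      have "(xs ! k, xs ! Suc k) \<notin> P" using nl k unfolding natural_labeling_def by fastforce
      moreover have "(xs ! Suc k, xs ! k) \<notin> P" using ord k l by (metis Suc_lessD less_not_refl2 not_less_eq order.asym)
      ultimately show ?thesis by (simp add: incomparable_def)
    qed
    define ys where "ys = tau P (Suc k) xs"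
    have ys: "ys = xs[k := xs ! Suc k, Suc k := xs ! k]"
      using inc k l by (simp add: ys_def tau_def)
    have yl: "ys \<in> lin_ext n P" unfolding ys_def by (rule tau_lin_ext[OF x])
    have "wt xs < wt ys" unfolding ys using wt_swap k l by simp
    moreover have "wt ys \<le> n * (n * n)" by (rule wt_bound[OF yl])
    ultimately have "n * (n * n) - wt ys < n * (n * n) - wt xs" by linarith
    then have "(ys, [1..<Suc n]) \<in> (tau_edges n P)\<^sup>*" using less.hyps yl by blast
    moreover have "(xs, ys) \<in> tau_edges n P"
      unfolding tau_edges_def using x yl k by (auto simp: ys_def)
    ultimately show ?thesis by (meson converse_rtrancl_into_rtrancl)
  qed
qed

lemma tau_edges_sym:
  assumes "(a, b) \<in> tau_edges n P" shows "(b, a) \<in> tau_edges n P"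
proof -
  obtain j where j: "j \<in> {1..<n}" "b = tau P j a" "a \<in> lin_ext n P" "b \<in> lin_ext n P"
    using assms unfolding tau_edges_def by blast
  have "a = tau P j b" using j tau_invol by metis
  then show ?thesis using j unfolding tau_edges_def by blast
qed

lemma tau_conn:
  assumes nl: "natural_labeling n P"
  shows "strongly_connected_on (lin_ext n P) (tau_edges n P)"
  unfolding strongly_connected_on_def
proof (intro ballI)
  fix x y assume x: "x \<in> lin_ext n P" and y: "y \<in> lin_ext n P"
  have 1: "(x, [1..<Suc n]) \<in> (tau_edges n P)\<^sup>*" by (rule reach_sorted[OF nl x])
  have "(y, [1..<Suc n]) \<in> (tau_edges n P)\<^sup>*" by (rule reach_sorted[OF nl y])
  then have "([1..<Suc n], y) \<in> ((tau_edges n P)\<inverse>)\<^sup>*" by (simp add: rtrancl_converse)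
  moreover have "(tau_edges n P)\<inverse> = tau_edges n P" using tau_edges_sym by auto
  ultimately have "([1..<Suc n], y) \<in> (tau_edges n P)\<^sup>*" by simp
  with 1 show "(x, y) \<in> (tau_edges n P)\<^sup>*" by simp
qed


lemma fold_tau_inv: "fold (tau P) (rev l) (fold (tau P) l xs) = xs"
  by (induction l arbitrary: xs) (simp_all add: tau_invol)

lemma fold_tau_lin: "xs \<in> lin_ext n P \<Longrightarrow> fold (tau P) l xs \<in> lin_ext n P"
  by (induction l arbitrary: xs) (simp_all add: tau_lin_ext)

lemma promo_Cons: "j < n \<Longrightarrow> promo n P j xs = promo n P (Suc j) (tau P j xs)"
  unfolding promo_def by (simp add: upt_conv_Cons)

lemma finite_lin: "finite (lin_ext n P)"
proof -
  have "lin_ext n P \<subseteq> {xs. set xs \<subseteq> {1..n} \<and> length xs = n}"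
    using lin_ext_len unfolding lin_ext_def by blast
  moreover have "finite {xs. set xs \<subseteq> {1..n} \<and> length xs = n}"
    by (rule finite_lists_length_eq) simp
  ultimately show ?thesis by (rule finite_subset)
qed

lemma funpow_in: "x \<in> A \<Longrightarrow> f ` A \<subseteq> A \<Longrightarrow> (f ^^ k) x \<in> A"
  by (induction k) auto

lemma funpow_cancel:
  assumes "inj_on f A" "f ` A \<subseteq> A"
  shows "y \<in> A \<Longrightarrow> z \<in> A \<Longrightarrow> (f ^^ a) y = (f ^^ a) z \<Longrightarrow> y = z"
proof (induction a)
  case 0 then show ?case by simp
next
  case (Suc a)
  have "(f ^^ a) y \<in> A" "(f ^^ a) z \<in> A" using Suc.prems assms funpow_in by metis+
  moreover have "f ((f ^^ a) y) = f ((f ^^ a) z)" using Suc.prems by simp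
  ultimately have "(f ^^ a) y = (f ^^ a) z" using assms(1) by (meson inj_onD)
  then show ?case using Suc by blast
qed

lemma orbit:
  assumes fin: "finite A" and im: "f ` A \<subseteq> A" and inj: "inj_on f A" and x: "x \<in> A"
  shows "\<exists>k>0. (f ^^ k) x = x"
proof -
  define g where "g k = (f ^^ k) x" for k
  have gi: "g ` {..card A} \<subseteq> A" using funpow_in[OF x im] by (auto simp: g_def)
  have "\<not> inj_on g {..card A}"
  proof
    assume "inj_on g {..card A}"
    then have "card {..card A} \<le> card A" using card_inj_on_le[OF _ gi fin] by blast
    then show False by simp
  qed
  then obtain a b where ab: "a \<noteq> b" "g a = g b" unfolding inj_on_def by blast
  have "\<exists>a b. a < b \<and> g a = g b"
    using ab by (metis linorder_neqE_nat)
  then obtain a b where ab: "a < b" "g a = g b" by blast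
  have "(f ^^ a) ((f ^^ (b - a)) x) = (f ^^ (a + (b - a))) x" by (simp add: funpow_add)
  also have "a + (b - a) = b" using ab by simp
  finally have "(f ^^ a) ((f ^^ (b - a)) x) = (f ^^ a) x" using ab unfolding g_def by simp
  then have "(f ^^ (b - a)) x = x"
    using funpow_cancel[OF inj im] funpow_in[OF x im] x by blast
  then show ?thesis using ab by (intro exI[of _ "b - a"]) simp
qed

lemma tau_in_promo:
  assumes x: "xs \<in> lin_ext n P" and j: "1 \<le> j" "j < n"
  shows "(xs, tau P j xs) \<in> (promo_edges n P)\<^sup>*"
proof -
  define f where "f = promo n P (Suc j)"
  define s where "s = tau P j xs"
  have s: "s \<in> lin_ext n P" unfolding s_def by (rule tau_lin_ext[OF x])
  have im: "f ` lin_ext n P \<subseteq> lin_ext n P" unfolding f_def promo_def using fold_tau_lin by blast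
  have inj: "inj_on f (lin_ext n P)"
    unfolding f_def promo_def by (rule inj_on_inverseI[where g = "fold (tau P) (rev [Suc j..<n])"]) (rule fold_tau_inv)
  have r: "promo n P j xs = f s" unfolding f_def s_def using promo_Cons j by simp
  have fs: "f s \<in> lin_ext n P" using im s by blast
  have jn: "j \<in> {1..n}" using j by simp
  have e1: "(xs, f s) \<in> promo_edges n P"
  proof -
    have eq: "f s = promo n P j xs" using r by simp
    show ?thesis unfolding promo_edges_def using x fs eq jn by blast
  qed
  have step: "(f s, (f ^^ m) (f s)) \<in> (promo_edges n P)\<^sup>*" for m
  proof (induction m)
    case 0 then show ?case by simp
  next
    case (Suc m)
    have inl: "(f ^^ m) (f s) \<in> lin_ext n P" using funpow_in[OF fs im] .
    have inl2: "f ((f ^^ m) (f s)) \<in> lin_ext n P" using inl im by blast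
    have jn2: "Suc j \<in> {1..n}" using j by simp
    have "((f ^^ m) (f s), f ((f ^^ m) (f s))) \<in> promo_edges n P"
      unfolding promo_edges_def using inl inl2 jn2 unfolding f_def by auto
    then have "(f s, f ((f ^^ m) (f s))) \<in> (promo_edges n P)\<^sup>*"
      by (rule rtrancl_into_rtrancl[OF Suc.IH])
    then show ?case by simp
  qed
  obtain k where k: "k > 0" "(f ^^ k) s = s" using orbit[OF finite_lin im inj s] by blast
  have "(f ^^ (k - 1)) (f s) = (f ^^ k) s"
  proof -
    have "k = Suc (k - 1)" using k(1) by simp
    then have "(f ^^ k) s = (f ^^ Suc (k - 1)) s" by simp
    also have "\<dots> = (f ^^ (k - 1)) (f s)" by (simp only: funpow_Suc_right o_apply)
    finally show ?thesis by simp
  qed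
  then have "(f s, s) \<in> (promo_edges n P)\<^sup>*" using step[of "k - 1"] k by simp
  with e1 show ?thesis unfolding s_def by (meson converse_rtrancl_into_rtrancl)
qed

theorem proposition4p1:
  fixes n :: nat and P :: "(nat \<times> nat) set"
  assumes "partial_order_on {1..n} P"
    and "natural_labeling n P"
  shows "strongly_connected_on (lin_ext n P) (promo_edges n P)
       \<and> strongly_connected_on (lin_ext n P) (tau_edges n P)"
proof -
  have T: "strongly_connected_on (lin_ext n P) (tau_edges n P)" by (rule tau_conn[OF assms(2)])
  have sub: "tau_edges n P \<subseteq> (promo_edges n P)\<^sup>*"
  proof
    fix e assume "e \<in> tau_edges n P"
    then obtain a j where "e = (a, tau P j a)" "a \<in> lin_ext n P" "j \<in> {1..<n}"
      unfolding tau_edges_def by blast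
    then show "e \<in> (promo_edges n P)\<^sup>*" using tau_in_promo by auto
  qed
  have "(tau_edges n P)\<^sup>* \<subseteq> (promo_edges n P)\<^sup>*"
    using rtrancl_mono[OF sub] by simp
  then have "strongly_connected_on (lin_ext n P) (promo_edges n P)"
    using T unfolding strongly_connected_on_def by blast
  with T show ?thesis by blast
qed

end
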